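(* Let $n\ge 7$ and let $r_1,\ldots,r_n$ be any positive reals. Then there exists a homothetic packing of $n$ cubes with radii $r_1,\ldots,r_n$ and more than $3n-3$ contacts.
   Context: Let $C=\{(x,y,z):-1\le x,y,z\le 1\}\subset\mathbb{R}^3$. A homothetic cube packing with radii $r_1,\ldots,r_n$ is a set $\{C_1,\ldots,C_n\}$ with $C_i=r_iC+p_i$, $p_i\in\mathbb{R}^3$, whose interiors are pairwise disjoint. A contact is an unordered pair $\{i,j\}$, $i\ne j$, with $C_i\cap C_j\ne\emptyset$. *)

theory Defs
  imports "HOL-Analysis.Analysis"
begin

definition unit_cube :: "(real^3) set" where
  "unit_cube = {x. \<forall>i. -1 \<le> x $ i \<and> x $ i \<le> 1}"

definition hcube :: "real \<Rightarrow> real^3 \<Rightarrow> (real^3) set" where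
  "hcube r p = (\<lambda>x. p + r *\<^sub>R x) ` unit_cube"

definition homothetic_cube_packing :: "nat \<Rightarrow> (nat \<Rightarrow> real) \<Rightarrow> (nat \<Rightarrow> real^3) \<Rightarrow> bool" where
  "homothetic_cube_packing n r p \<longleftrightarrow>
     (\<forall>i<n. \<forall>j<n. i \<noteq> j \<longrightarrow> interior (hcube (r i) (p i)) \<inter> interior (hcube (r j) (p j)) = {})"

definition contacts :: "nat \<Rightarrow> (nat \<Rightarrow> real) \<Rightarrow> (nat \<Rightarrow> real^3) \<Rightarrow> nat set set" where
  "contacts n r p = {{i, j} | i j. i < n \<and> j < n \<and> i \<noteq> j \<and>
      hcube (r i) (p i) \<inter> hcube (r j) (p j) \<noteq> {}}"

end

theory Submission
  imports Defs
begin

lemma hcube_eq: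
  assumes "r > 0"
  shows "hcube r p = {x. \<forall>i. \<bar>x$i - p$i\<bar> \<le> r}"
proof (intro set_eqI iffI)
  fix x assume "x \<in> hcube r p"
  then obtain y where y: "y \<in> unit_cube" "x = p + r *\<^sub>R y" unfolding hcube_def by auto
  show "x \<in> {x. \<forall>i. \<bar>x$i - p$i\<bar> \<le> r}"
  proof (clarsimp)
    fix i
    have "-1 \<le> y$i" "y$i \<le> 1" using y(1) unfolding unit_cube_def by auto
    then have "\<bar>y$i\<bar> \<le> 1" by auto
    then have "r * \<bar>y$i\<bar> \<le> r" using assms by (simp add: mult_le_cancel_left1)
    then show "\<bar>x$i - p$i\<bar> \<le> r" using y(2) assms by (simp add: abs_mult)
  qed
next
  fix x assume x: "x \<in> {x. \<forall>i. \<bar>x$i - p$i\<bar> \<le> r}"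
  define y where "y = (1/r) *\<^sub>R (x - p)"
  have "x = p + r *\<^sub>R y" using assms unfolding y_def by simp
  moreover have "y \<in> unit_cube"
    unfolding unit_cube_def y_def
  proof (clarsimp)
    fix i
    have "\<bar>x$i - p$i\<bar> \<le> r" using x by auto
    then show "- 1 \<le> (x $ i - p $ i) / r \<and> (x $ i - p $ i) / r \<le> 1"
      using assms by (auto simp: divide_simps abs_le_iff)
  qed
  ultimately show "x \<in> hcube r p" unfolding hcube_def by auto
qed

lemma hcube_cbox:
  assumes "r > 0"
  shows "hcube r p = cbox (p - (\<chi> i. r)) (p + (\<chi> i. r))"
proof -
  have e: "\<And>a b c::real. (\<bar>a - b\<bar> \<le> c) = (b - c \<le> a \<and> a \<le> b + c)" by auto
  show ?thesis unfolding hcube_eq[OF assms] mem_box_cart set_eq_iff by (simp add: e)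
qed

lemma interior_hcube:
  assumes "r > 0"
  shows "interior (hcube r p) = {x. \<forall>i. \<bar>x$i - p$i\<bar> < r}"
proof -
  have e: "\<And>a b c::real. (\<bar>a - b\<bar> < c) = (b - c < a \<and> a < b + c)" by auto
  show ?thesis unfolding hcube_cbox[OF assms] interior_cbox mem_box_cart set_eq_iff by (simp add: e)
qed

lemma disj_interior:
  assumes "r > 0" "s > 0" "p$i + r \<le> q$i - s \<or> q$i + s \<le> p$i - r"
  shows "interior (hcube r p) \<inter> interior (hcube s q) = {}"
  unfolding interior_hcube[OF assms(1)] interior_hcube[OF assms(2)]
proof (rule ccontr)
  assume "{x. \<forall>i. \<bar>x $ i - p $ i\<bar> < r} \<inter> {x. \<forall>i. \<bar>x $ i - q $ i\<bar> < s} \<noteq> {}"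
  then obtain x where "\<bar>x $ i - p $ i\<bar> < r" "\<bar>x $ i - q $ i\<bar> < s" by auto
  then show False using assms(3) by (auto simp: abs_less_iff)
qed


lemma sort_perm:
  fixes r :: "nat \<Rightarrow> real" and n :: nat
  obtains \<sigma> where "bij_betw \<sigma> {..<n} {..<n}"
    "\<And>k l. k \<le> l \<Longrightarrow> l < n \<Longrightarrow> r (\<sigma> k) \<le> r (\<sigma> l)"
proof -
  define xs where "xs = sort_key r [0..<n]"
  have d: "distinct xs" and len: "length xs = n" and st: "set xs = {..<n}"
    unfolding xs_def by (auto simp: length_sort)
  have b: "bij_betw ((!) xs) {..<n} {..<n}"
    using bij_betw_nth[OF d] len st by auto
  have so: "sorted (map r xs)" unfolding xs_def by simp
  have "r (xs ! k) \<le> r (xs ! l)" if "k \<le> l" "l < n" for k l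
    using sorted_nth_mono[OF so, of k l] that len by simp
  then show ?thesis using that b by blast
qed

lemma transfer_perm:
  fixes r :: "nat \<Rightarrow> real" and Q :: "nat \<Rightarrow> real^3"
  assumes b: "bij_betw \<sigma> {..<n} {..<n}"
    and pk: "homothetic_cube_packing n (\<lambda>k. r (\<sigma> k)) Q"
  shows "\<exists>p. homothetic_cube_packing n r p \<and>
           card (contacts n (\<lambda>k. r (\<sigma> k)) Q) \<le> card (contacts n r p)"
proof -
  define \<tau> where "\<tau> = inv_into {..<n} \<sigma>"
  have inj: "inj_on \<sigma> {..<n}" using b bij_betw_def by blast
  have t1: "\<tau> i < n" if "i < n" for i
    using b that unfolding \<tau>_def bij_betw_def
    by (metis inv_into_into lessThan_iff)
  have t2: "\<sigma> (\<tau> i) = i" if "i < n" for i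
    using b that unfolding \<tau>_def bij_betw_def by (simp add: f_inv_into_f)
  have t3: "\<tau> (\<sigma> k) = k" if "k < n" for k
    using inj that unfolding \<tau>_def by (simp add: inv_into_f_f)
  have s1: "\<sigma> k < n" if "k < n" for k using b that bij_betwE by blast
  define p where "p i = Q (\<tau> i)" for i
  have pack: "homothetic_cube_packing n r p"
    unfolding homothetic_cube_packing_def
  proof (intro allI impI)
    fix i j assume ij: "i < n" "j < n" "i \<noteq> j"
    have "\<tau> i \<noteq> \<tau> j" using ij t2 by metis
    then have "interior (hcube (r (\<sigma> (\<tau> i))) (Q (\<tau> i))) \<inter> interior (hcube (r (\<sigma> (\<tau> j))) (Q (\<tau> j))) = {}"
      using pk t1 ij unfolding homothetic_cube_packing_def by blast
    then show "interior (hcube (r i) (p i)) \<inter> interior (hcube (r j) (p j)) = {}"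
      using t2 ij unfolding p_def by simp
  qed
  have sub: "image \<sigma> ` contacts n (\<lambda>k. r (\<sigma> k)) Q \<subseteq> contacts n r p"
  proof
    fix S assume "S \<in> image \<sigma> ` contacts n (\<lambda>k. r (\<sigma> k)) Q"
    then obtain k l where kl: "S = \<sigma> ` {k, l}" "k < n" "l < n" "k \<noteq> l"
      "hcube (r (\<sigma> k)) (Q k) \<inter> hcube (r (\<sigma> l)) (Q l) \<noteq> {}"
      unfolding contacts_def by blast
    have "\<sigma> k \<noteq> \<sigma> l" using inj kl by (meson inj_on_eq_iff lessThan_iff)
    moreover have "p (\<sigma> k) = Q k" "p (\<sigma> l) = Q l" using t3 kl unfolding p_def by auto
    ultimately have "hcube (r (\<sigma> k)) (p (\<sigma> k)) \<inter> hcube (r (\<sigma> l)) (p (\<sigma> l)) \<noteq> {}"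
      "\<sigma> k \<noteq> \<sigma> l" using kl by auto
    then show "S \<in> contacts n r p"
      unfolding contacts_def using kl s1 by blast
  qed
  have fin: "finite (contacts n r p)"
    by (rule finite_subset[of _ "Pow {..<n}"]) (auto simp: contacts_def)
  have "contacts n (\<lambda>k. r (\<sigma> k)) Q \<subseteq> Pow {..<n}" by (auto simp: contacts_def)
  then have "inj_on (image \<sigma>) (contacts n (\<lambda>k. r (\<sigma> k)) Q)"
    using inj_on_image_Pow[OF inj] inj_on_subset by blast
  then have "card (contacts n (\<lambda>k. r (\<sigma> k)) Q) = card (image \<sigma> ` contacts n (\<lambda>k. r (\<sigma> k)) Q)"
    by (simp add: card_image)
  also have "\<dots> \<le> card (contacts n r p)" using card_mono[OF fin sub] .
  finally show ?thesis using pack by blast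
qed

fun E :: "(nat \<Rightarrow> real) \<Rightarrow> nat \<Rightarrow> real" where
  "E L (Suc (Suc (Suc (Suc k)))) = E L k + L (Suc (Suc (Suc (Suc k))))"
| "E L _ = 0"

lemma E_small: "k < 4 \<Longrightarrow> E L k = 0"
proof -
  assume "k < 4"
  then have "k = 0 \<or> k = Suc 0 \<or> k = Suc (Suc 0) \<or> k = Suc (Suc (Suc 0))" by auto
  then show ?thesis by auto
qed

lemma E_step: "4 \<le> m \<Longrightarrow> E L m = E L (m - 4) + L m"
proof -
  assume "4 \<le> m"
  then obtain k where "m = Suc (Suc (Suc (Suc k)))" by (metis add.commute add_Suc_shift le_Suc_ex numeral_Bit0 numeral_One one_add_one plus_1_eq_Suc)
  then show ?thesis by simp
qed


lemma E_mono_Suc: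
  fixes \<rho> :: "nat \<Rightarrow> real"
  assumes pos: "\<And>k. k < n \<Longrightarrow> \<rho> k > 0"
    and mono: "\<And>k l. k \<le> l \<Longrightarrow> l < n \<Longrightarrow> \<rho> k \<le> \<rho> l"
  shows "Suc k < n \<Longrightarrow> E (\<lambda>k. 2 * \<rho> k) k \<le> E (\<lambda>k. 2 * \<rho> k) (Suc k)"
proof (induction k rule: less_induct)
  case (less k)
  let ?L = "\<lambda>k. 2 * \<rho> k"
  show ?case
  proof (cases "Suc k < 4")
    case True then show ?thesis by (simp add: E_small)
  next
    case False
    show ?thesis
    proof (cases "k = 3")
      case True
      then show ?thesis using E_step[of "Suc k" ?L] pos[of "Suc k"] less.prems
        by (simp add: E_small)
    next
      case False
      then have k4: "4 \<le> k" using \<open>\<not> Suc k < 4\<close> by auto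
      have ih: "E ?L (k - 4) \<le> E ?L (Suc (k - 4))"
        using less.IH[of "k - 4"] less.prems k4 by auto
      have "Suc k - 4 = Suc (k - 4)" using k4 by auto
      then have "E ?L (Suc k) = E ?L (Suc (k - 4)) + ?L (Suc k)"
        using E_step[of "Suc k" ?L] k4 by simp
      moreover have "E ?L k = E ?L (k - 4) + ?L k" using E_step[of k ?L] k4 by simp
      moreover have "\<rho> k \<le> \<rho> (Suc k)" using mono[of k "Suc k"] less.prems by auto
      ultimately show ?thesis using ih by simp
    qed
  qed
qed

lemma E_mono:
  fixes \<rho> :: "nat \<Rightarrow> real"
  assumes pos: "\<And>k. k < n \<Longrightarrow> \<rho> k > 0"
    and mo: "\<And>k l. k \<le> l \<Longrightarrow> l < n \<Longrightarrow> \<rho> k \<le> \<rho> l"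
  shows "k \<le> l \<Longrightarrow> l < n \<Longrightarrow> E (\<lambda>k. 2 * \<rho> k) k \<le> E (\<lambda>k. 2 * \<rho> k) l"
proof (induction l)
  case 0 then show ?case by simp
next
  case (Suc m)
  show ?case
  proof (cases "k = Suc m")
    case True then show ?thesis by simp
  next
    case False
    then have "E (\<lambda>k. 2 * \<rho> k) k \<le> E (\<lambda>k. 2 * \<rho> k) m" using Suc by auto
    also have "\<dots> \<le> E (\<lambda>k. 2 * \<rho> k) (Suc m)" using E_mono_Suc[of n \<rho> m] pos mo Suc.prems by blast
    finally show ?thesis .
  qed
qed

definition sx :: "nat \<Rightarrow> real" where
  "sx k = (if k mod 4 = 0 \<or> k mod 4 = 3 then 1 else -1)"
definition sy :: "nat \<Rightarrow> real" where
  "sy k = (if k mod 4 \<le> 1 then 1 else -1)"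

definition QQ :: "(nat \<Rightarrow> real) \<Rightarrow> nat \<Rightarrow> real^3" where
  "QQ \<rho> k = vector [sx k * \<rho> k, sy k * \<rho> k, E (\<lambda>k. 2 * \<rho> k) k - \<rho> k]"

lemma sxy_diff: "k mod 4 \<noteq> l mod 4 \<Longrightarrow> sx k \<noteq> sx l \<or> sy k \<noteq> sy l"
proof -
  have "k mod 4 \<in> {0,1,2,3}" "l mod 4 \<in> {0,1,2,3}" by auto
  then show "k mod 4 \<noteq> l mod 4 \<Longrightarrow> sx k \<noteq> sx l \<or> sy k \<noteq> sy l"
    unfolding sx_def sy_def by auto
qed

lemma mem_hcube_axis:
  fixes \<rho> :: "nat \<Rightarrow> real"
  assumes "\<rho> m > 0"
    and "E (\<lambda>k. 2 * \<rho> k) m - 2 * \<rho> m \<le> z" "z \<le> E (\<lambda>k. 2 * \<rho> k) m"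
  shows "vector [0, 0, z] \<in> hcube (\<rho> m) (QQ \<rho> m)"
  unfolding hcube_eq[OF assms(1)] QQ_def
  using assms by (auto simp: forall_3 sx_def sy_def abs_le_iff)


lemma construction:
  fixes \<rho> :: "nat \<Rightarrow> real" and n :: nat
  assumes n7: "n \<ge> 7"
    and pos: "\<And>k. k < n \<Longrightarrow> \<rho> k > 0"
    and mo: "\<And>k l. k \<le> l \<Longrightarrow> l < n \<Longrightarrow> \<rho> k \<le> \<rho> l"
  shows "homothetic_cube_packing n \<rho> (QQ \<rho>) \<and> card (contacts n \<rho> (QQ \<rho>)) \<ge> 3 * n"
proof -
  let ?L = "\<lambda>k. 2 * \<rho> k"
  have Em: "k \<le> l \<Longrightarrow> l < n \<Longrightarrow> E ?L k \<le> E ?L l" for k l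
    using E_mono[of n \<rho> k l] pos mo by blast
  have E0: "E ?L k \<ge> 0" if "k < n" for k
    using Em[of 0 k] that by simp
  have small: "E ?L m - 2 * \<rho> m \<le> 0" if "m < 8" "m < n" for m
  proof (cases "m < 4")
    case True then show ?thesis using E_small[OF True] pos[OF that(2)] by simp
  next
    case False
    then have "E ?L m = E ?L (m - 4) + ?L m" using E_step[of m ?L] by simp
    moreover have "E ?L (m - 4) = 0" using that by (intro E_small) auto
    ultimately show ?thesis by simp
  qed
  have touch: "hcube (\<rho> k) (QQ \<rho> k) \<inter> hcube (\<rho> l) (QQ \<rho> l) \<noteq> {}"
    if kl: "k < l" "l < n" "l < 8 \<or> l - 4 < k" for k l
  proof (cases "l < 8")
    case True
    have "vector [0, 0, 0] \<in> hcube (\<rho> k) (QQ \<rho> k)"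
      using mem_hcube_axis[of \<rho> k 0] pos small[of k] E0[of k] kl True by auto
    moreover have "vector [0, 0, 0] \<in> hcube (\<rho> l) (QQ \<rho> l)"
      using mem_hcube_axis[of \<rho> l 0] pos small[of l] E0[of l] kl True by auto
    ultimately show ?thesis by blast
  next
    case False
    then have k4: "l - 4 < k" "4 \<le> k" "8 \<le> l" using kl by auto
    define z where "z = E ?L (l - 4)"
    have "E ?L l = z + ?L l" using E_step[of l ?L] k4 unfolding z_def by simp
    then have "vector [0, 0, z] \<in> hcube (\<rho> l) (QQ \<rho> l)"
      using mem_hcube_axis[of \<rho> l z] pos[of l] kl by auto
    moreover have "E ?L k = E ?L (k - 4) + ?L k" using E_step[of k ?L] k4 by simp
    moreover have "E ?L (k - 4) \<le> z" using Em[of "k - 4" "l - 4"] kl k4 unfolding z_def by auto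
    moreover have "z \<le> E ?L k" using Em[of "l - 4" k] kl k4 unfolding z_def by auto
    ultimately have "vector [0, 0, z] \<in> hcube (\<rho> k) (QQ \<rho> k) \<and> vector [0, 0, z] \<in> hcube (\<rho> l) (QQ \<rho> l)"
      using mem_hcube_axis[of \<rho> k z] pos kl by auto
    then show ?thesis by blast
  qed
  have pack: "homothetic_cube_packing n \<rho> (QQ \<rho>)"
    unfolding homothetic_cube_packing_def
  proof (intro allI impI)
    fix i j assume ij: "i < n" "j < n" "i \<noteq> j"
    have ri: "\<rho> i > 0" and rj: "\<rho> j > 0" using pos ij by auto
    show "interior (hcube (\<rho> i) (QQ \<rho> i)) \<inter> interior (hcube (\<rho> j) (QQ \<rho> j)) = {}"
    proof (cases "i mod 4 = j mod 4")
      case False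
      then have "sx i \<noteq> sx j \<or> sy i \<noteq> sy j" by (rule sxy_diff)
      then show ?thesis
      proof
        assume "sx i \<noteq> sx j"
        then have "QQ \<rho> i $ 1 + \<rho> i \<le> QQ \<rho> j $ 1 - \<rho> j \<or> QQ \<rho> j $ 1 + \<rho> j \<le> QQ \<rho> i $ 1 - \<rho> i"
          unfolding QQ_def sx_def by (auto split: if_splits)
        then show ?thesis by (rule disj_interior[OF ri rj])
      next
        assume "sy i \<noteq> sy j"
        then have "QQ \<rho> i $ 2 + \<rho> i \<le> QQ \<rho> j $ 2 - \<rho> j \<or> QQ \<rho> j $ 2 + \<rho> j \<le> QQ \<rho> i $ 2 - \<rho> i"
          unfolding QQ_def sy_def by (auto split: if_splits)
        then show ?thesis by (rule disj_interior[OF ri rj])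
      qed
    next
      case True
      have gen: "QQ \<rho> a $ 3 + \<rho> a \<le> QQ \<rho> b $ 3 - \<rho> b"
        if ab: "a < b" "b < n" "a mod 4 = b mod 4" for a b
      proof -
        have "a + 4 \<le> b" using ab by presburger
        then have "E ?L a \<le> E ?L (b - 4)" using Em[of a "b - 4"] ab by auto
        moreover have "E ?L b = E ?L (b - 4) + ?L b" using E_step[of b ?L] \<open>a + 4 \<le> b\<close> by simp
        ultimately show ?thesis unfolding QQ_def by simp
      qed
      show ?thesis
      proof (cases "i < j")
        case True
        then show ?thesis using gen[of i j] ij \<open>i mod 4 = j mod 4\<close> disj_interior[OF ri rj] by auto
      next
        case False
        then have "j < i" using ij by auto
        then show ?thesis using gen[of j i] ij \<open>i mod 4 = j mod 4\<close> disj_interior[OF ri rj] by auto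
      qed
    qed
  qed
  define A where "A = {3..<n} \<times> {1,2,3::nat}"
  define X :: "(nat \<times> nat) set" where "X = {(1,1),(2,1),(2,2),(4,4),(5,4),(5,5),(6,4),(6,5),(6,6)}"
  define D where "D = A \<union> X"
  define g where "g = (\<lambda>(l, d). {l - d, l :: nat})"
  have Dprop: "1 \<le> d \<and> d \<le> l \<and> l < n \<and> (l < 8 \<or> d \<le> 3)" if "(l, d) \<in> D" for l d
    using that n7 unfolding D_def A_def X_def by auto
  have cA: "card A = 3 * (n - 3)" unfolding A_def by (simp add: card_cartesian_product)
  have cX: "card X = 9" unfolding X_def by simp
  have "A \<inter> X = {}" unfolding A_def X_def by auto
  then have cD: "card D = 3 * n" unfolding D_def
    using card_Un_disjoint[of A X] cA cX n7 unfolding A_def X_def by auto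
  have inj: "inj_on g D"
  proof (rule inj_onI)
    fix x y assume xy: "x \<in> D" "y \<in> D" "g x = g y"
    obtain l d where x: "x = (l, d)" by fastforce
    obtain l' d' where y: "y = (l', d')" by fastforce
    have p1: "1 \<le> d" "d \<le> l" using Dprop xy x by auto
    have p2: "1 \<le> d'" "d' \<le> l'" using Dprop xy y by auto
    have "{l - d, l} = {l' - d', l'}" using xy x y unfolding g_def by simp
    then have "(l - d = l' - d' \<and> l = l') \<or> (l - d = l' \<and> l = l' - d')"
      by (simp add: doubleton_eq_iff)
    then show "x = y" using p1 p2 x y by auto
  qed
  have sub: "g ` D \<subseteq> contacts n \<rho> (QQ \<rho>)"
  proof
    fix S assume "S \<in> g ` D"
    then obtain l d where ld: "(l, d) \<in> D" "S = {l - d, l}" unfolding g_def by auto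
    have pr: "1 \<le> d" "d \<le> l" "l < n" "l < 8 \<or> d \<le> 3" using Dprop[OF ld(1)] by auto
    have "hcube (\<rho> (l - d)) (QQ \<rho> (l - d)) \<inter> hcube (\<rho> l) (QQ \<rho> l) \<noteq> {}"
    proof -
      have "l < 8 \<or> l - 4 < l - d" using pr by auto
      then show ?thesis using touch[of "l - d" l] pr by auto
    qed
    moreover have "l - d < n" "l - d \<noteq> l" using pr by auto
    ultimately show "S \<in> contacts n \<rho> (QQ \<rho>)" unfolding contacts_def using ld pr by blast
  qed
  have fin: "finite (contacts n \<rho> (QQ \<rho>))"
    by (rule finite_subset[of _ "Pow {..<n}"]) (auto simp: contacts_def)
  have "3 * n = card (g ` D)" using cD card_image[OF inj] by simp
  also have "\<dots> \<le> card (contacts n \<rho> (QQ \<rho>))" using card_mono[OF fin sub] .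
  finally show ?thesis using pack by simp
qed

theorem proposition24:
  fixes n :: nat and r :: "nat \<Rightarrow> real"
  assumes "n \<ge> 7"
    and "\<And>i. i < n \<Longrightarrow> r i > 0"
  shows "\<exists>p :: nat \<Rightarrow> real^3. homothetic_cube_packing n r p \<and>
           card (contacts n r p) > 3 * n - 3"
proof -
  obtain \<sigma> where b: "bij_betw \<sigma> {..<n} {..<n}"
    and m: "\<And>k l. k \<le> l \<Longrightarrow> l < n \<Longrightarrow> r (\<sigma> k) \<le> r (\<sigma> l)"
    using sort_perm[of n r] by blast
  have pos: "r (\<sigma> k) > 0" if "k < n" for k
    using assms(2) b that bij_betwE by blast
  have c: "homothetic_cube_packing n (\<lambda>k. r (\<sigma> k)) (QQ (\<lambda>k. r (\<sigma> k))) \<and>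
      card (contacts n (\<lambda>k. r (\<sigma> k)) (QQ (\<lambda>k. r (\<sigma> k)))) \<ge> 3 * n"
    using construction[of n "\<lambda>k. r (\<sigma> k)"] assms(1) pos m by blast
  then obtain p where "homothetic_cube_packing n r p"
    "card (contacts n (\<lambda>k. r (\<sigma> k)) (QQ (\<lambda>k. r (\<sigma> k)))) \<le> card (contacts n r p)"
    using transfer_perm[OF b] by blast
  then show ?thesis using c assms(1) by (intro exI[of _ p]) auto
qed

end
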